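(* Let $S$ be a monoid, $A$ a right $S$-act with a maximal subact $B$, and $a\in A\setminus B$. The following are equivalent: (1) $\mathfrak{M}=\{s\in S\mid as\in B\}$; (2) for $s\in S$, $as=a$ implies $s\notin\mathfrak{M}$.
   Context: $S$ is a monoid with identity $1$ having at least one right non-invertible element. A (right) $S$-act is a nonempty set with an action $(a,s)\mapsto as$, $a1=a$, $a(st)=(as)t$. A subact is a nonempty subset closed under the action; a maximal subact is a proper subact not properly contained in another proper subact. $\mathfrak{M}=\{s\in S\mid st\neq1\ \forall t\in S\}$ is the unique maximal right ideal of $S$. *)

theory Defs
  imports Main
begin

definition is_act :: "'a set \<Rightarrow> ('a \<Rightarrow> 's::monoid_mult \<Rightarrow> 'a) \<Rightarrow> bool" where
  "is_act A act \<longleftrightarrow> A \<noteq> {} \<and> (\<forall>a\<in>A. \<forall>s. act a s \<in> A)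
     \<and> (\<forall>a\<in>A. act a 1 = a) \<and> (\<forall>a\<in>A. \<forall>s t. act a (s * t) = act (act a s) t)"

definition is_subact :: "'a set \<Rightarrow> ('a \<Rightarrow> 's::monoid_mult \<Rightarrow> 'a) \<Rightarrow> 'a set \<Rightarrow> bool" where
  "is_subact A act B \<longleftrightarrow> B \<noteq> {} \<and> B \<subseteq> A \<and> (\<forall>b\<in>B. \<forall>s. act b s \<in> B)"

definition is_maximal_subact :: "'a set \<Rightarrow> ('a \<Rightarrow> 's::monoid_mult \<Rightarrow> 'a) \<Rightarrow> 'a set \<Rightarrow> bool" where
  "is_maximal_subact A act B \<longleftrightarrow> is_subact A act B \<and> B \<noteq> A
     \<and> (\<forall>C. is_subact A act C \<and> C \<noteq> A \<and> B \<subseteq> C \<longrightarrow> C = B)"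

definition MM :: "'s::monoid_mult set" where
  "MM = {s. \<forall>t. s * t \<noteq> 1}"

end

theory Submission
  imports Defs
begin

theorem lemma2p7:
  fixes A :: "'a set" and act :: "'a \<Rightarrow> 's::monoid_mult \<Rightarrow> 'a" and B :: "'a set" and a :: 'a
  assumes nonunit: "\<exists>s::'s. \<forall>t. s * t \<noteq> 1"
    and act: "is_act A act"
    and max: "is_maximal_subact A act B"
    and a: "a \<in> A" "a \<notin> B"
  shows "(MM = {s. act a s \<in> B}) \<longleftrightarrow> (\<forall>s. act a s = a \<longrightarrow> s \<notin> MM)"
proof
  assume h: "MM = {s. act a s \<in> B}"
  show "\<forall>s. act a s = a \<longrightarrow> s \<notin> MM"
  proof (intro allI impI notI)
    fix s assume "act a s = a" "s \<in> MM"
    then have "s \<in> {s. act a s \<in> B}" using h by blast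
    then show False using \<open>act a s = a\<close> a(2) by simp
  qed
next
  assume h: "\<forall>s. act a s = a \<longrightarrow> s \<notin> MM"
  have sub: "is_subact A act B" "B \<noteq> A"
    and mx: "\<And>C. is_subact A act C \<Longrightarrow> C \<noteq> A \<Longrightarrow> B \<subseteq> C \<Longrightarrow> C = B"
    using max unfolding is_maximal_subact_def by auto
  have BA: "B \<subseteq> A" "B \<noteq> {}" and Bcl: "\<And>b s. b \<in> B \<Longrightarrow> act b s \<in> B"
    using sub(1) unfolding is_subact_def by auto
  have cl: "\<And>x s. x \<in> A \<Longrightarrow> act x s \<in> A" and one: "\<And>x. x \<in> A \<Longrightarrow> act x 1 = x"
    and comp: "\<And>x s t. x \<in> A \<Longrightarrow> act x (s * t) = act (act x s) t"
    using act unfolding is_act_def by auto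
  show "MM = {s. act a s \<in> B}"
  proof (intro set_eqI iffI)
    fix s :: 's assume sM: "s \<in> MM"
    show "s \<in> {s. act a s \<in> B}"
    proof (rule ccontr)
      assume nB: "s \<notin> {s. act a s \<in> B}"
      define C where "C = B \<union> range (act (act a s))"
      have asA: "act a s \<in> A" using cl a(1) by auto
      have "is_subact A act C"
        unfolding is_subact_def
      proof (intro conjI ballI allI)
        show "C \<noteq> {}" unfolding C_def using BA by auto
        show "C \<subseteq> A" unfolding C_def using BA cl asA by auto
        fix b u assume "b \<in> C"
        then show "act b u \<in> C"
        proof (cases "b \<in> B")
          case True then show ?thesis using Bcl unfolding C_def by auto
        next
          case False
          with \<open>b \<in> C\<close> obtain v where "b = act (act a s) v" unfolding C_def by auto
          then have "act b u = act (act a s) (v * u)" using comp[OF asA] by simp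
          then show ?thesis unfolding C_def by auto
        qed
      qed
      moreover have "C \<noteq> B"
      proof
        assume "C = B"
        moreover have "act (act a s) 1 \<in> C" unfolding C_def by auto
        ultimately show False using nB one asA by auto
      qed
      ultimately have "C = A" using mx unfolding C_def by auto
      then have "a \<in> C" using a by auto
      then obtain t where "a = act (act a s) t" using a unfolding C_def by auto
      then have "act a (s * t) = a" using comp a(1) by auto
      with h have "s * t \<notin> MM" by auto
      then obtain u where "s * t * u = 1" unfolding MM_def by auto
      then have "s * (t * u) = 1" by (simp add: mult.assoc)
      with sM show False unfolding MM_def by auto
    qed
  next
    fix s :: 's assume "s \<in> {s. act a s \<in> B}"
    then have asB: "act a s \<in> B" by auto
    show "s \<in> MM" unfolding MM_def
    proof (safe)
      fix t assume "s * t = 1"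
      then have "act (act a s) t = a" using comp[OF a(1), of s t] one a(1) by simp
      with Bcl asB a(2) show False by metis
    qed
  qed
qed

end
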